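(* Let $K\ge 2$, let $\mathcal{X}$ be an instance space, let $\mathcal{D}$ be a joint distribution of $(X,Y)$ on $\mathcal{X}\times[K]$ and $\overline{\mathcal{D}}$ a joint distribution of $(X,\overline{Y})$ on $\mathcal{X}\times[K]$ with the same marginal of $X$, such that $\mathbb{P}(\overline{Y}=\cdot\mid X=x)=\mathbf{T}\,\mathbb{P}(Y=\cdot\mid X=x)$ for all $x$, where $\mathbf{T}$ has $0$ on the diagonal and $\frac{1}{K-1}$ off the diagonal. Let $\mathbf{g}:\mathcal{X}\to\mathbb{R}^K$ be a decision function and $s:\mathbb{R}\to\mathbb{R}_+$ a binary loss with $s(z)+s(-z)=1$ for all $z$. Consider either (OVA) $\ell(k,\mathbf{g}(x))=s(\mathbf{g}_k(x))+\frac{1}{K-1}\sum_{k'\neq k}s(-\mathbf{g}_{k'}(x))$ and $\overline{\ell}_{c}(\overline{k},\mathbf{g}(x))=\frac{1}{K-1}\sum_{k\neq\overline{k}}s(\mathbf{g}_k(x))+s(-\mathbf{g}_{\overline{k}}(x))$; or (PC) $\ell(k,\mathbf{g}(x))=\sum_{k'\neq k}s(\mathbf{g}_k(x)-\mathbf{g}_{k'}(x))$ and $\overline{\ell}_{c}(\overline{k},\mathbf{g}(x))=\sum_{k'\neq\overline{k}}s(\mathbf{g}_{k'}(x)-\mathbf{g}_{\overline{k}}(x))$. Let $\overline{\ell}(k,\mathbf{g}(x))=-(K-1)\ell(k,\mathbf{g}(x))+\sum_{j=1}^K\ell(j,\mathbf{g}(x))$ and $\overline{R}(\mathbf{g};\overline{\ell})=\mathbb{E}_{(X,\overline{Y})\sim\overline{\mathcal{D}}}[\overline{\ell}(\overline{Y},\mathbf{g}(X))]$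 (which equals the classification risk $\mathbb{E}_{\mathcal{D}}[\ell(Y,\mathbf{g}(X))]$). Then there are non-negative constants $M_1,M_2$ with $\sum_{\overline{y}=1}^K\overline{\ell}_{c}(\overline{y},\mathbf{g}(x))=M_1$ for all $x$ and $\overline{\ell}_{c}(\overline{y},\mathbf{g}(x))+\ell(\overline{y},\mathbf{g}(x))=M_2$ for all $x,\overline{y}$, and $$\overline{R}(\mathbf{g};\overline{\ell})=(K-1)\,\mathbb{E}_{(X,\overline{Y})\sim\overline{\mathcal{D}}}\big[\overline{\ell}_{c}(\overline{Y},\mathbf{g}(X))\big]-M_1+M_2.$$
   Context: $\mathbf{g}_k(x)$ denotes the $k$-th coordinate of $\mathbf{g}(x)$. The losses labelled OVA and PC are the one-versus-all and pairwise-comparison multi-class losses; $\overline{\ell}_c$ denotes their complementary-label versions (the paper writes these also as $\overline{\ell}$, with the same symbol as the loss built from $\ell$; here they are distinguished by the subscript $c$). *)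

theory Defs
  imports "HOL-Probability.Probability"
begin

text \<open>Labels are [K] = {1..K}; a score vector g(x) in R^K is a function nat => real
  whose coordinates 1..K are used.\<close>

definition trans_T :: "nat \<Rightarrow> nat \<Rightarrow> nat \<Rightarrow> real" where
  "trans_T K i j = (if i = j then 0 else 1 / (real K - 1))"

definition ova_loss :: "(real \<Rightarrow> real) \<Rightarrow> nat \<Rightarrow> nat \<Rightarrow> (nat \<Rightarrow> real) \<Rightarrow> real" where
  "ova_loss s K k z = s (z k) + 1 / (real K - 1) * (\<Sum>k'\<in>{1..K} - {k}. s (- z k'))"

definition ova_cl :: "(real \<Rightarrow> real) \<Rightarrow> nat \<Rightarrow> nat \<Rightarrow> (nat \<Rightarrow> real) \<Rightarrow> real" where
  "ova_cl s K kb z = 1 / (real K - 1) * (\<Sum>k\<in>{1..K} - {kb}. s (z k)) + s (- z kb)"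

definition pc_loss :: "(real \<Rightarrow> real) \<Rightarrow> nat \<Rightarrow> nat \<Rightarrow> (nat \<Rightarrow> real) \<Rightarrow> real" where
  "pc_loss s K k z = (\<Sum>k'\<in>{1..K} - {k}. s (z k - z k'))"

definition pc_cl :: "(real \<Rightarrow> real) \<Rightarrow> nat \<Rightarrow> nat \<Rightarrow> (nat \<Rightarrow> real) \<Rightarrow> real" where
  "pc_cl s K kb z = (\<Sum>k'\<in>{1..K} - {kb}. s (z k' - z kb))"

definition comp_loss :: "(nat \<Rightarrow> (nat \<Rightarrow> real) \<Rightarrow> real) \<Rightarrow> nat \<Rightarrow> nat \<Rightarrow> (nat \<Rightarrow> real) \<Rightarrow> real" where
  "comp_loss l K k z = - (real K - 1) * l k z + (\<Sum>j=1..K. l j z)"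

text \<open>Expectation over a joint distribution of (X, label) on X x [K], given by the
  marginal mu of X and the conditional label probabilities eta x k = P(label = k | X = x).\<close>
definition joint_exp :: "'x measure \<Rightarrow> ('x \<Rightarrow> nat \<Rightarrow> real) \<Rightarrow> nat \<Rightarrow> ('x \<Rightarrow> nat \<Rightarrow> real) \<Rightarrow> real" where
  "joint_exp \<mu> eta K f = (\<integral>x. (\<Sum>k=1..K. eta x k * f x k) \<partial>\<mu>)"

end

theory Submission
  imports Defs
begin

lemma sum_minus1: fixes K k :: nat assumes "k \<in> {1..K}" shows "(\<Sum>j\<in>{1..K} - {k}. f j) = (\<Sum>j=1..K. f j) - (f k::real)"
  using sum.remove[of "{1..K}" k f] assms by simp

lemma ova_pair: assumes K: "K \<ge> 2" and s_sym: "\<And>z. s z + s (- z) = 1" and k: "k \<in> {1..K}"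
  shows "ova_cl s K k z + ova_loss s K k z = 2"
proof -
  have c: "card ({1..K} - {k}) = K - 1" using k by simp
  have "ova_cl s K k z + ova_loss s K k z =
     1 / (real K - 1) * (\<Sum>j\<in>{1..K} - {k}. s (z j) + s (- z j)) + (s (z k) + s (- z k))"
    unfolding ova_cl_def ova_loss_def by (simp add: sum.distrib algebra_simps)
  also have "\<dots> = 1 / (real K - 1) * (real K - 1) + 1" using s_sym c K by (simp add: of_nat_diff)
  also have "\<dots> = 2" using K by simp
  finally show ?thesis .
qed

lemma ova_sum: assumes K: "K \<ge> 2" and s_sym: "\<And>z. s z + s (- z) = 1"
  shows "(\<Sum>k=1..K. ova_cl s K k z) = real K"
proof -
  have "(\<Sum>k=1..K. ova_cl s K k z) = (\<Sum>k=1..K. 1 / (real K - 1) * ((\<Sum>j=1..K. s (z j)) - s (z k))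
     + s (- z k))"
  proof (rule sum.cong)
    fix k assume k: "k \<in> {1..K}"
    show "ova_cl s K k z = 1 / (real K - 1) * ((\<Sum>j=1..K. s (z j)) - s (z k)) + s (- z k)"
      unfolding ova_cl_def sum_minus1[OF k] ..
  qed simp
  also have "\<dots> = 1 / (real K - 1) * (\<Sum>k=1..K. (\<Sum>j=1..K. s (z j)) - s (z k))
     + (\<Sum>k=1..K. s (- z k))"
    by (simp add: sum.distrib sum_distrib_left)
  also have "\<dots> = 1 / (real K - 1) * ((real K - 1) * (\<Sum>j=1..K. s (z j))) + (\<Sum>k=1..K. s (- z k))"
    by (simp add: sum_subtractf algebra_simps)
  also have "\<dots> = (\<Sum>k=1..K. s (z k) + s (- z k))" using K by (simp add: sum.distrib)
  also have "\<dots> = real K" using s_sym by simp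
  finally show ?thesis .
qed

lemma pc_pair: assumes s_sym: "\<And>z. s z + s (- z) = 1" and k: "k \<in> {1..K}"
  shows "pc_cl s K k z + pc_loss s K k z = real K - 1"
proof -
  have c: "card ({1..K} - {k}) = K - 1" using k by simp
  have ss: "\<And>a b. s (a - b) + s (b - a) = 1" using s_sym by (metis minus_diff_eq)
  have "pc_cl s K k z + pc_loss s K k z = (\<Sum>j\<in>{1..K} - {k}. s (z j - z k) + s (- (z j - z k)))"
    unfolding pc_cl_def pc_loss_def by (simp add: sum.distrib)
  also have "\<dots> = real K - 1" using ss c k by (simp add: of_nat_diff)
  finally show ?thesis .
qed

lemma pc_sum: assumes s_sym: "\<And>z. s z + s (- z) = 1"
  shows "(\<Sum>k=1..K. pc_cl s K k z) = real K * (real K - 1) / 2"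
proof -
  define T where "T = (\<Sum>k=1..K. \<Sum>j=1..K. s (z j - z k))"
  have s0: "s 0 = 1/2" using s_sym[of 0] by simp
  have ss: "\<And>a b. s (a - b) + s (b - a) = 1" using s_sym by (metis minus_diff_eq)
  have "T = (\<Sum>j=1..K. \<Sum>k=1..K. s (z j - z k))" unfolding T_def by (rule sum.swap)
  hence "2 * T = (\<Sum>k=1..K. \<Sum>j=1..K. s (z j - z k)) + (\<Sum>k=1..K. \<Sum>j=1..K. s (z k - z j))"
    unfolding T_def by simp
  also have "\<dots> = (\<Sum>k=1..K. \<Sum>j=1..K. s (z j - z k) + s (z k - z j))"
    by (simp add: sum.distrib)
  also have "\<dots> = real K * real K" using ss by simp
  finally have T: "T = real K * real K / 2" by simp
  have "(\<Sum>k=1..K. pc_cl s K k z) = (\<Sum>k=1..K. (\<Sum>j=1..K. s (z j - z k)) - s 0)"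
  proof (rule sum.cong)
    fix k assume k: "k \<in> {1..K}"
    show "pc_cl s K k z = (\<Sum>j=1..K. s (z j - z k)) - s 0"
      unfolding pc_cl_def sum_minus1[OF k] by simp
  qed simp
  also have "\<dots> = T - real K / 2" unfolding T_def by (simp add: sum_subtractf s0)
  also have "\<dots> = real K * (real K - 1) / 2" using T by (simp add: field_simps)
  finally show ?thesis .
qed

theorem corollary2:
  fixes K :: nat and \<mu> :: "'x measure" and eta etabar :: "'x \<Rightarrow> nat \<Rightarrow> real"
    and g :: "'x \<Rightarrow> nat \<Rightarrow> real" and s :: "real \<Rightarrow> real"
    and l lc :: "nat \<Rightarrow> (nat \<Rightarrow> real) \<Rightarrow> real"
  assumes K: "K \<ge> 2"
    and prob: "prob_space \<mu>"
    and eta_meas: "\<And>k. (\<lambda>x. eta x k) \<in> borel_measurable \<mu>"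
    and eta_nonneg: "\<And>x k. k \<in> {1..K} \<Longrightarrow> eta x k \<ge> 0"
    and eta_sum: "\<And>x. (\<Sum>k=1..K. eta x k) = 1"
    and etabar_def: "\<And>x k. k \<in> {1..K} \<Longrightarrow> etabar x k = (\<Sum>j=1..K. trans_T K k j * eta x j)"
    and g_meas: "\<And>k. (\<lambda>x. g x k) \<in> borel_measurable \<mu>"
    and s_meas: "s \<in> borel_measurable borel"
    and s_nonneg: "\<And>z. s z \<ge> 0"
    and s_sym: "\<And>z. s z + s (- z) = 1"
    and losses: "(l = ova_loss s K \<and> lc = ova_cl s K) \<or> (l = pc_loss s K \<and> lc = pc_cl s K)"
  shows "\<exists>M1 M2. M1 \<ge> 0 \<and> M2 \<ge> 0
    \<and> (\<forall>x. (\<Sum>yb=1..K. lc yb (g x)) = M1)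
    \<and> (\<forall>x. \<forall>yb\<in>{1..K}. lc yb (g x) + l yb (g x) = M2)
    \<and> joint_exp \<mu> etabar K (\<lambda>x k. comp_loss l K k (g x))
        = (real K - 1) * joint_exp \<mu> etabar K (\<lambda>x k. lc k (g x)) - M1 + M2"
proof -
  interpret prob_space \<mu> by (rule prob)
  note [measurable] = s_meas g_meas eta_meas
  have Kr: "real K \<ge> 2" using K by simp
  obtain M1 M2 where M: "M1 \<ge> 0" "M2 \<ge> 0" "\<And>z. (\<Sum>yb=1..K. lc yb z) = M1"
    "\<And>z yb. yb \<in> {1..K} \<Longrightarrow> lc yb z + l yb z = M2"
    and lnn: "\<And>z yb. l yb z \<ge> 0" and lcnn: "\<And>z yb. lc yb z \<ge> 0"
    and lcm: "\<And>k. (\<lambda>x. lc k (g x)) \<in> borel_measurable \<mu>"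
  proof (cases "l = ova_loss s K \<and> lc = ova_cl s K")
    case True
    have m: "(\<lambda>x. lc k (g x)) \<in> borel_measurable \<mu>" for k
      using True unfolding ova_cl_def by simp
    have l: "l = ova_loss s K" and c: "lc = ova_cl s K" using True by auto
    show ?thesis
    proof (rule that[of "real K" 2])
      show "0 \<le> real K" by simp
      show "(0::real) \<le> 2" by simp
      show "(\<Sum>yb=1..K. lc yb z) = real K" for z unfolding c by (rule ova_sum[where s=s and K=K, OF K s_sym])
      show "lc yb z + l yb z = 2" if "yb \<in> {1..K}" for z yb
        unfolding c l by (rule ova_pair[where s=s and K=K, OF K s_sym that])
      show "l yb z \<ge> 0" for z yb unfolding l ova_loss_def
        using Kr by (intro add_nonneg_nonneg mult_nonneg_nonneg sum_nonneg s_nonneg) auto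
      show "lc yb z \<ge> 0" for z yb unfolding c ova_cl_def
        using Kr by (intro add_nonneg_nonneg mult_nonneg_nonneg sum_nonneg s_nonneg) auto
      show "(\<lambda>x. lc k (g x)) \<in> borel_measurable \<mu>" for k by (rule m)
    qed
  next
    case False
    with losses have F: "l = pc_loss s K \<and> lc = pc_cl s K" by blast
    have m: "(\<lambda>x. lc k (g x)) \<in> borel_measurable \<mu>" for k
      using F unfolding pc_cl_def by simp
    have l: "l = pc_loss s K" and c: "lc = pc_cl s K" using F by auto
    show ?thesis
    proof (rule that[of "real K * (real K - 1) / 2" "real K - 1"])
      show "0 \<le> real K * (real K - 1) / 2" using Kr by simp
      show "(0::real) \<le> real K - 1" using Kr by simp
      show "(\<Sum>yb=1..K. lc yb z) = real K * (real K - 1) / 2" for z unfolding c by (rule pc_sum[where s=s and K=K, OF s_sym])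
      show "lc yb z + l yb z = real K - 1" if "yb \<in> {1..K}" for z yb
        unfolding c l by (rule pc_pair[where s=s and K=K, OF s_sym that])
      show "l yb z \<ge> 0" for z yb unfolding l pc_loss_def
        by (intro sum_nonneg s_nonneg)
      show "lc yb z \<ge> 0" for z yb unfolding c pc_cl_def
        by (intro sum_nonneg s_nonneg)
      show "(\<lambda>x. lc k (g x)) \<in> borel_measurable \<mu>" for k by (rule m)
    qed
  qed
  have comp: "comp_loss l K k z = (real K - 1) * lc k z - M1 + M2" if k: "k \<in> {1..K}" for k z
  proof -
    have "(\<Sum>j=1..K. l j z) = (\<Sum>j=1..K. M2 - lc j z)"
    proof (rule sum.cong)
      fix j assume "j \<in> {1..K}"
      from M(4)[OF this, of z] show "l j z = M2 - lc j z" by simp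
    qed simp
    also have "\<dots> = real K * M2 - M1" using M(3)[of z] by (simp only: sum_subtractf sum_constant card_atLeastAtMost) simp
    moreover have lk: "l k z = M2 - lc k z" using M(4)[OF k, of z] by simp
    ultimately show ?thesis unfolding comp_loss_def lk
      by (simp add: algebra_simps)
  qed
  have ebsum: "(\<Sum>k=1..K. etabar x k) = 1" for x
  proof -
    have "(\<Sum>k=1..K. etabar x k) = (\<Sum>k=1..K. \<Sum>j=1..K. trans_T K k j * eta x j)"
      by (rule sum.cong) (simp_all add: etabar_def)
    also have "\<dots> = (\<Sum>j=1..K. \<Sum>k=1..K. trans_T K k j * eta x j)" by (rule sum.swap)
    also have "\<dots> = (\<Sum>j=1..K. eta x j)"
    proof (rule sum.cong)
      fix j assume j: "j \<in> {1..K}"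
      have "(\<Sum>k=1..K. trans_T K k j * eta x j) = (\<Sum>k\<in>{1..K} - {j}. 1 / (real K - 1) * eta x j)
         + trans_T K j j * eta x j"
        using j by (subst sum.remove[of _ j]) (auto simp: trans_T_def intro!: sum.cong)
      also have "\<dots> = eta x j" using j Kr by (simp add: trans_T_def of_nat_diff)
      finally show "(\<Sum>k=1..K. trans_T K k j * eta x j) = eta x j" .
    qed simp
    finally show ?thesis using eta_sum by simp
  qed
  have ebnn: "etabar x k \<ge> 0" if "k \<in> {1..K}" for x k
    using that eta_nonneg by (auto simp: etabar_def trans_T_def intro!: sum_nonneg)
  have eble: "etabar x k \<le> 1" if "k \<in> {1..K}" for x k
  proof -
    have "etabar x k \<le> (\<Sum>k=1..K. etabar x k)"
      by (rule member_le_sum) (use that ebnn in auto)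
    thus ?thesis using ebsum by simp
  qed
  have ebm: "(\<lambda>x. etabar x k) \<in> borel_measurable \<mu>" if "k \<in> {1..K}" for k
  proof -
    have "(\<lambda>x. \<Sum>j=1..K. trans_T K k j * eta x j) \<in> borel_measurable \<mu>"
      by measurable
    thus ?thesis using etabar_def[OF that] by simp
  qed
  have lcle: "lc k z \<le> M2" if "k \<in> {1..K}" for k z
    using M(4)[OF that, of z] lnn[of k z] by simp
  have int: "integrable \<mu> (\<lambda>x. etabar x k * lc k (g x))" if k: "k \<in> {1..K}" for k
  proof (rule integrable_const_bound[where B = M2])
    show "AE x in \<mu>. norm (etabar x k * lc k (g x)) \<le> M2"
    proof (rule AE_I2)
      fix x
      have "etabar x k * lc k (g x) \<le> 1 * M2"
        by (rule mult_mono) (use eble[OF k] lcle[OF k] lcnn ebnn[OF k] in auto)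
      thus "norm (etabar x k * lc k (g x)) \<le> M2"
        using ebnn[OF k] lcnn[of k "g x"] by simp
    qed
    show "(\<lambda>x. etabar x k * lc k (g x)) \<in> borel_measurable \<mu>"
      using ebm[OF k] lcm[of k] by (rule borel_measurable_times)
  qed
  have "joint_exp \<mu> etabar K (\<lambda>x k. comp_loss l K k (g x))
      = (\<integral>x. (real K - 1) * (\<Sum>k=1..K. etabar x k * lc k (g x)) + (M2 - M1) \<partial>\<mu>)"
    unfolding joint_exp_def
  proof (rule Bochner_Integration.integral_cong[OF refl])
    fix x
    have "(\<Sum>k=1..K. etabar x k * comp_loss l K k (g x))
        = (\<Sum>k=1..K. (real K - 1) * (etabar x k * lc k (g x)) + (M2 - M1) * etabar x k)"
      by (rule sum.cong) (simp_all add: comp algebra_simps)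
    also have "\<dots> = (real K - 1) * (\<Sum>k=1..K. etabar x k * lc k (g x)) + (M2 - M1)"
      using ebsum[of x] by (simp add: sum.distrib sum_distrib_left[symmetric])
    finally show "(\<Sum>k=1..K. etabar x k * comp_loss l K k (g x))
        = (real K - 1) * (\<Sum>k=1..K. etabar x k * lc k (g x)) + (M2 - M1)" .
  qed
  also have "\<dots> = (real K - 1) * joint_exp \<mu> etabar K (\<lambda>x k. lc k (g x)) + (M2 - M1)"
  proof -
    have I: "integrable \<mu> (\<lambda>x. \<Sum>k=1..K. etabar x k * lc k (g x))"
      using int by (intro Bochner_Integration.integrable_sum) auto
    have "(\<integral>x. (real K - 1) * (\<Sum>k=1..K. etabar x k * lc k (g x)) + (M2 - M1) \<partial>\<mu>)
      = (\<integral>x. (real K - 1) * (\<Sum>k=1..K. etabar x k * lc k (g x)) \<partial>\<mu>) + (\<integral>x. (M2 - M1) \<partial>\<mu>)"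
      by (rule Bochner_Integration.integral_add) (use I in auto)
    also have "\<dots> = (real K - 1) * (\<integral>x. (\<Sum>k=1..K. etabar x k * lc k (g x)) \<partial>\<mu>) + (M2 - M1)"
      by (simp add: prob_space)
    finally show ?thesis unfolding joint_exp_def .
  qed
  finally show ?thesis using M by (intro exI[of _ M1] exI[of _ M2]) auto
qed

end
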